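(* The class of doubly ordered frames is not modally definable: there is no set of formulas of the bimodal language (with two modal operators interpreted by the two relations of a frame) whose class of validating frames $\langle X, R_1, R_2\rangle$ is exactly the class of doubly ordered frames.
   Context: A doubly ordered frame is a structure $\langle X, \leq_1, \leq_2\rangle$ where $\leq_1,\leq_2$ are quasiorders (reflexive and transitive binary relations) on $X$ such that $x \leq_1 y$ and $x \leq_2 y$ together imply $x = y$. Frames here are Kripke frames $\langle X, R_1, R_2\rangle$ with two binary relations; a class of such frames is modally definable if it is the class of all frames validating some set of formulas of the basic modal language with two modalities, the $i$-th interpreted via $R_i$. *)

theory Defs
  imports Main
begin

datatype 'v fm =
    Var 'v
  | Bot
  | Neg "'v fm"
  | Conj "'v fm" "'v fm"
  | Disj "'v fm" "'v fm"
  | Imp "'v fm" "'v fm"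
  | Box1 "'v fm"
  | Box2 "'v fm"

definition kframe :: "'w set \<Rightarrow> ('w \<Rightarrow> 'w \<Rightarrow> bool) \<Rightarrow> ('w \<Rightarrow> 'w \<Rightarrow> bool) \<Rightarrow> bool" where
  "kframe X R1 R2 \<longleftrightarrow>
     (\<forall>x y. R1 x y \<longrightarrow> x \<in> X \<and> y \<in> X) \<and> (\<forall>x y. R2 x y \<longrightarrow> x \<in> X \<and> y \<in> X)"

fun sat :: "'w set \<Rightarrow> ('w \<Rightarrow> 'w \<Rightarrow> bool) \<Rightarrow> ('w \<Rightarrow> 'w \<Rightarrow> bool) \<Rightarrow> ('v \<Rightarrow> 'w set)
            \<Rightarrow> 'w \<Rightarrow> 'v fm \<Rightarrow> bool" where
  "sat X R1 R2 V w (Var p) = (w \<in> V p)"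
| "sat X R1 R2 V w Bot = False"
| "sat X R1 R2 V w (Neg a) = (\<not> sat X R1 R2 V w a)"
| "sat X R1 R2 V w (Conj a b) = (sat X R1 R2 V w a \<and> sat X R1 R2 V w b)"
| "sat X R1 R2 V w (Disj a b) = (sat X R1 R2 V w a \<or> sat X R1 R2 V w b)"
| "sat X R1 R2 V w (Imp a b) = (sat X R1 R2 V w a \<longrightarrow> sat X R1 R2 V w b)"
| "sat X R1 R2 V w (Box1 a) = (\<forall>v\<in>X. R1 w v \<longrightarrow> sat X R1 R2 V v a)"
| "sat X R1 R2 V w (Box2 a) = (\<forall>v\<in>X. R2 w v \<longrightarrow> sat X R1 R2 V v a)"

definition valid_in :: "'w set \<Rightarrow> ('w \<Rightarrow> 'w \<Rightarrow> bool) \<Rightarrow> ('w \<Rightarrow> 'w \<Rightarrow> bool) \<Rightarrow> 'v fm \<Rightarrow> bool" where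
  "valid_in X R1 R2 \<phi> \<longleftrightarrow> (\<forall>V. \<forall>w\<in>X. sat X R1 R2 V w \<phi>)"

definition quasiorder_on :: "'w set \<Rightarrow> ('w \<Rightarrow> 'w \<Rightarrow> bool) \<Rightarrow> bool" where
  "quasiorder_on X R \<longleftrightarrow>
     (\<forall>x\<in>X. R x x) \<and> (\<forall>x\<in>X. \<forall>y\<in>X. \<forall>z\<in>X. R x y \<longrightarrow> R y z \<longrightarrow> R x z)"

definition doubly_ordered :: "'w set \<Rightarrow> ('w \<Rightarrow> 'w \<Rightarrow> bool) \<Rightarrow> ('w \<Rightarrow> 'w \<Rightarrow> bool) \<Rightarrow> bool" where
  "doubly_ordered X R1 R2 \<longleftrightarrow>
     kframe X R1 R2 \<and> quasiorder_on X R1 \<and> quasiorder_on X R2 \<and>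
     (\<forall>x\<in>X. \<forall>y\<in>X. R1 x y \<longrightarrow> R2 x y \<longrightarrow> x = y)"

end

theory Submission
  imports Defs
begin

lemma pmorph_sat:
  assumes fX: "\<And>u. u \<in> XF \<Longrightarrow> f u \<in> XG"
    and f1: "\<And>u v. u \<in> XF \<Longrightarrow> v \<in> XF \<Longrightarrow> R1F u v \<Longrightarrow> R1G (f u) (f v)"
    and f2: "\<And>u v. u \<in> XF \<Longrightarrow> v \<in> XF \<Longrightarrow> R2F u v \<Longrightarrow> R2G (f u) (f v)"
    and b1: "\<And>u v'. u \<in> XF \<Longrightarrow> v' \<in> XG \<Longrightarrow> R1G (f u) v' \<Longrightarrow> \<exists>v\<in>XF. R1F u v \<and> f v = v'"
    and b2: "\<And>u v'. u \<in> XF \<Longrightarrow> v' \<in> XG \<Longrightarrow> R2G (f u) v' \<Longrightarrow> \<exists>v\<in>XF. R2F u v \<and> f v = v'"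
  shows "w \<in> XF \<Longrightarrow> sat XF R1F R2F (\<lambda>p. {u\<in>XF. f u \<in> V p}) w \<phi> = sat XG R1G R2G V (f w) \<phi>"
proof (induction \<phi> arbitrary: w)
  case (Box1 \<phi>)
  show ?case
  proof
    assume L: "sat XF R1F R2F (\<lambda>p. {u\<in>XF. f u \<in> V p}) w (Box1 \<phi>)"
    show "sat XG R1G R2G V (f w) (Box1 \<phi>)"
      using L Box1 b1 by fastforce
  next
    assume R: "sat XG R1G R2G V (f w) (Box1 \<phi>)"
    show "sat XF R1F R2F (\<lambda>p. {u\<in>XF. f u \<in> V p}) w (Box1 \<phi>)"
      using R Box1 f1 fX by fastforce
  qed
next
  case (Box2 \<phi>)
  show ?case
  proof
    assume L: "sat XF R1F R2F (\<lambda>p. {u\<in>XF. f u \<in> V p}) w (Box2 \<phi>)"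
    show "sat XG R1G R2G V (f w) (Box2 \<phi>)"
      using L Box2 b2 by fastforce
  next
    assume R: "sat XG R1G R2G V (f w) (Box2 \<phi>)"
    show "sat XF R1F R2F (\<lambda>p. {u\<in>XF. f u \<in> V p}) w (Box2 \<phi>)"
      using R Box2 f2 fX by fastforce
  qed
qed auto

lemma fresh:
  assumes "infinite (UNIV :: 'w set)" "finite (S :: 'w set)"
  shows "\<exists>x. x \<notin> S"
  proof (rule ccontr)
  assume "\<not> (\<exists>x. x \<notin> S)"
  then have "S = UNIV" by blast
  then show False using assms by simp
qed

theorem mainTheorem2:
  assumes "infinite (UNIV :: 'w set)"
  shows "\<not> (\<exists>\<Phi> :: 'v fm set. \<forall>(X :: 'w set) R1 R2. kframe X R1 R2 \<longrightarrow>
            ((\<forall>\<phi>\<in>\<Phi>. valid_in X R1 R2 \<phi>) \<longleftrightarrow> doubly_ordered X R1 R2))"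
proof
  assume "\<exists>\<Phi> :: 'v fm set. \<forall>(X :: 'w set) R1 R2. kframe X R1 R2 \<longrightarrow>
            ((\<forall>\<phi>\<in>\<Phi>. valid_in X R1 R2 \<phi>) \<longleftrightarrow> doubly_ordered X R1 R2)"
  then obtain \<Phi> :: "'v fm set" where H: "\<And>(X :: 'w set) R1 R2. kframe X R1 R2 \<Longrightarrow>
            ((\<forall>\<phi>\<in>\<Phi>. valid_in X R1 R2 \<phi>) \<longleftrightarrow> doubly_ordered X R1 R2)" by blast
  obtain a :: 'w where True by blast
  obtain b :: 'w where "b \<notin> {a}" using fresh[OF assms, of "{a}"] by blast
  obtain c :: 'w where "c \<notin> {a,b}" using fresh[OF assms, of "{a,b}"] by blast
  obtain d :: 'w where "d \<notin> {a,b,c}" using fresh[OF assms, of "{a,b,c}"] by blast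
  note ne = \<open>b \<notin> {a}\<close> \<open>c \<notin> {a,b}\<close> \<open>d \<notin> {a,b,c}\<close>
  define XF where "XF = {a,b,c,d}"
  define R1F where "R1F = (\<lambda>u v. (u \<in> {a,b} \<and> v \<in> {a,b}) \<or> (u \<in> {c,d} \<and> v \<in> {c,d}))"
  define R2F where "R2F = (\<lambda>u v. (u \<in> {a,c} \<and> v \<in> {a,c}) \<or> (u \<in> {b,d} \<and> v \<in> {b,d}))"
  define XG where "XG = {a,b}"
  define RG where "RG = (\<lambda>u v. u \<in> {a,b} \<and> v \<in> {a,b})"
  define f where "f = (\<lambda>u. if u = a \<or> u = d then a else b)"
  have kF: "kframe XF R1F R2F" unfolding kframe_def XF_def R1F_def R2F_def by auto
  have dF: "doubly_ordered XF R1F R2F"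
    unfolding doubly_ordered_def quasiorder_on_def using kF ne
    unfolding XF_def R1F_def R2F_def by auto
  have vF: "\<forall>\<phi>\<in>\<Phi>. valid_in XF R1F R2F \<phi>" using H[OF kF] dF by blast
  have kG: "kframe XG RG RG" unfolding kframe_def XG_def RG_def by auto
  have ndG: "\<not> doubly_ordered XG RG RG"
    unfolding doubly_ordered_def using ne unfolding XG_def RG_def by auto
  have fX: "\<And>u. u \<in> XF \<Longrightarrow> f u \<in> XG" unfolding f_def XG_def by auto
  have f1: "\<And>u v. u \<in> XF \<Longrightarrow> v \<in> XF \<Longrightarrow> R1F u v \<Longrightarrow> RG (f u) (f v)"
    unfolding RG_def f_def by auto
  have f2: "\<And>u v. u \<in> XF \<Longrightarrow> v \<in> XF \<Longrightarrow> R2F u v \<Longrightarrow> RG (f u) (f v)"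
    unfolding RG_def f_def by auto
  have b1: "\<And>u v'. u \<in> XF \<Longrightarrow> v' \<in> XG \<Longrightarrow> RG (f u) v' \<Longrightarrow> \<exists>v\<in>XF. R1F u v \<and> f v = v'"
    unfolding XF_def XG_def RG_def R1F_def f_def using ne by auto
  have b2: "\<And>u v'. u \<in> XF \<Longrightarrow> v' \<in> XG \<Longrightarrow> RG (f u) v' \<Longrightarrow> \<exists>v\<in>XF. R2F u v \<and> f v = v'"
    unfolding XF_def XG_def RG_def R2F_def f_def using ne by auto
  have surj: "\<And>y. y \<in> XG \<Longrightarrow> \<exists>x\<in>XF. f x = y"
    unfolding XF_def XG_def f_def using ne by auto
  have "\<forall>\<phi>\<in>\<Phi>. valid_in XG RG RG \<phi>"
  proof (intro ballI)
    fix \<phi> assume "\<phi> \<in> \<Phi>"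
    then have v: "valid_in XF R1F R2F \<phi>" using vF by blast
    show "valid_in XG RG RG \<phi>"
      unfolding valid_in_def
    proof (intro allI ballI)
      fix V :: "'v \<Rightarrow> 'w set" and y assume "y \<in> XG"
      then obtain x where x: "x \<in> XF" "f x = y" using surj by blast
      have "sat XF R1F R2F (\<lambda>p. {u\<in>XF. f u \<in> V p}) x \<phi>" using v x unfolding valid_in_def by blast
      then show "sat XG RG RG V y \<phi>"
        using pmorph_sat[where XF=XF and XG=XG and R1F=R1F and R2F=R2F and R1G=RG and R2G=RG and f=f and V=V, OF fX f1 f2 b1 b2 x(1)] x by simp
    qed
  qed
  then show False using H[OF kG] ndG by blast
qed

end
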